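(* Let $f(z)=e^{-z+\lambda}+\xi$ with $\lambda,\xi\in\mathbb{C}$, $\operatorname{Re}\lambda<0$, $\operatorname{Re}\xi\ge1$, and let $g(z)=e^{z+\mu}+\zeta$ with $\mu,\zeta\in\mathbb{C}$, $\operatorname{Re}\mu<0$, $\operatorname{Re}\zeta\le-1$. Then $I(f)\cap I(g)=\emptyset$.
   Context: For an entire function $f$, $f^n$ denotes the $n$-th iterate and $I(f)=\{z\in\mathbb{C}: f^n(z)\to\infty\}$ is its escaping set. *)

theory Defs
  imports "HOL-Analysis.Analysis"
begin

definition escaping_set :: "(complex \<Rightarrow> complex) \<Rightarrow> complex set" where
  "escaping_set f = {z. filterlim (\<lambda>n. (f ^^ n) z) at_infinity sequentially}"

end

theory Submission
  imports Defs
begin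

lemma not_esc_bounded:
  assumes "\<And>n. norm ((F ^^ n) z) \<le> B"
  shows "z \<notin> escaping_set F"
proof
  assume "z \<in> escaping_set F"
  hence "filterlim (\<lambda>n. (F ^^ n) z) at_infinity sequentially" by (simp add: escaping_set_def)
  hence "filterlim (\<lambda>n. norm ((F ^^ n) z)) at_top sequentially"
    by (rule filterlim_at_infinity_imp_norm_at_top)
  hence "eventually (\<lambda>n. norm ((F ^^ n) z) > B) sequentially"
    by (simp add: filterlim_at_top_dense)
  then obtain n where "norm ((F ^^ n) z) > B" by (auto simp: eventually_sequentially)
  with assms[of n] show False by simp
qed

lemma f_part:
  fixes lam xi :: complex
  assumes "Re lam < 0" "Re xi \<ge> 1" "Re z \<ge> 0"
  shows "z \<notin> escaping_set (\<lambda>z. exp (-z + lam) + xi)"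
proof -
  define F where "F = (\<lambda>z. exp (-z + lam) + xi)"
  have step: "Re w \<ge> 0 \<Longrightarrow> norm (F w) \<le> norm xi + 1 \<and> Re (F w) \<ge> 0" for w
  proof -
    assume w: "Re w \<ge> 0"
    have "norm (exp (-w + lam)) = exp (- Re w + Re lam)" by (simp add: norm_exp_eq_Re)
    also have "\<dots> \<le> 1" using w assms by simp
    finally have e: "norm (exp (-w + lam)) \<le> 1" .
    have "Re (F w) = Re (exp (-w + lam)) + Re xi" by (simp add: F_def)
    moreover have "\<bar>Re (exp (-w + lam))\<bar> \<le> 1" using abs_Re_le_cmod[of "exp (-w+lam)"] e by linarith
    moreover have "norm (F w) \<le> norm (exp (-w + lam)) + norm xi" unfolding F_def by (rule norm_triangle_ineq)
    ultimately show ?thesis using e assms by linarith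
  qed
  have re: "Re ((F ^^ n) z) \<ge> 0" for n
    by (induction n) (use assms step in auto)
  have "norm ((F ^^ n) z) \<le> max (norm z) (norm xi + 1)" for n
  proof (cases n)
    case (Suc m) thus ?thesis using step[OF re[of m]] by auto
  qed simp
  thus ?thesis using not_esc_bounded unfolding F_def by blast
qed

lemma g_part:
  fixes mu zeta :: complex
  assumes "Re mu < 0" "Re zeta \<le> -1" "Re z \<le> 0"
  shows "z \<notin> escaping_set (\<lambda>z. exp (z + mu) + zeta)"
proof -
  define F where "F = (\<lambda>z. exp (z + mu) + zeta)"
  have step: "Re w \<le> 0 \<Longrightarrow> norm (F w) \<le> norm zeta + 1 \<and> Re (F w) \<le> 0" for w
  proof -
    assume w: "Re w \<le> 0"
    have "norm (exp (w + mu)) = exp (Re w + Re mu)" by (simp add: norm_exp_eq_Re)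
    also have "\<dots> \<le> 1" using w assms by simp
    finally have e: "norm (exp (w + mu)) \<le> 1" .
    have "Re (F w) = Re (exp (w + mu)) + Re zeta" by (simp add: F_def)
    moreover have "\<bar>Re (exp (w + mu))\<bar> \<le> 1" using abs_Re_le_cmod[of "exp (w+mu)"] e by linarith
    moreover have "norm (F w) \<le> norm (exp (w + mu)) + norm zeta" unfolding F_def by (rule norm_triangle_ineq)
    ultimately show ?thesis using e assms by linarith
  qed
  have re: "Re ((F ^^ n) z) \<le> 0" for n
    by (induction n) (use assms step in auto)
  have "norm ((F ^^ n) z) \<le> max (norm z) (norm zeta + 1)" for n
  proof (cases n)
    case (Suc m) thus ?thesis using step[OF re[of m]] by auto
  qed simp
  thus ?thesis using not_esc_bounded unfolding F_def by blast
qed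

theorem corollary1:
  fixes lam xi mu zeta :: complex
  assumes "Re lam < 0" and "Re xi \<ge> 1"
    and "Re mu < 0" and "Re zeta \<le> -1"
  shows "escaping_set (\<lambda>z. exp (-z + lam) + xi) \<inter> escaping_set (\<lambda>z. exp (z + mu) + zeta) = {}"
proof -
  have "z \<notin> escaping_set (\<lambda>z. exp (-z + lam) + xi) \<inter> escaping_set (\<lambda>z. exp (z + mu) + zeta)" for z
  proof (cases "Re z \<ge> 0")
    case True thus ?thesis using f_part[OF assms(1,2)] by blast
  next
    case False thus ?thesis using g_part[OF assms(3,4), of z] by auto
  qed
  thus ?thesis by blast
qed

end
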